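(* Let $L>0$ with $L\notin\mathcal N$, let $c\in\mathbb R$, let $\varepsilon>0$, and let $W,\underline c,\overline c$ be as in the context. Define $M(x)= 2c\,\frac{\sin(x/2)\sin((L-x)/2)}{\sin(L/2)}$ for $x\in[0,L]$ and, for $(y,z)\in L^2(0,L)\times\mathbb R$, $$V_1(y,z) = \varepsilon W(y) + \frac{1}{2}\left(\varepsilon \int_0^L M(x) y(x)\, dx - z \right)^2.$$ Then $$\underline{\nu}_1\big(\Vert y\Vert^2_{L^2(0,L)}+|z|^2\big)\leq V_1(y,z) \leq \overline{\nu}_1\big(\Vert y\Vert^2_{L^2(0,L)} + |z|^2\big)\quad\text{for all }(y,z)\in L^2(0,L)\times\mathbb R,$$ with $\overline{\nu}_1 = \max\left(\varepsilon \overline c+\varepsilon^2 \Vert M\Vert^2_{L^2(0,L)},1\right)$ and $\underline{\nu}_1=\min\left(\frac{\underline{c}\varepsilon}{2}, \frac{1}{2}\frac{\underline c \varepsilon}{\varepsilon^2 \Vert M\Vert^2_{L^2(0,L)}+ \underline c \varepsilon} \right)$. Moreover, for $\varepsilon\leq 1$, there exists a constant $C>0$ such that $$\varepsilon \big(\Vert y\Vert^2_{L^2(0,L)} + |z|^2\big) \leq V_1(y,z) \leq C \big(\Vert y\Vert^2_{L^2(0,L)} + |z|^2\big)\quad\text{for all }(y,z).$$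
   Context: $\mathcal{N}:=\left\{2\pi\sqrt{\tfrac{k^2+kl+l^2}{3}}:k,l\in\mathbb N\right\}$ (the set of critical lengths). Standing assumption: $L\notin\mathcal N$. Fix a functional $W:L^2(0,L)\to\mathbb R$ and positive constants $\lambda,\kappa_1,\kappa_2,\kappa_3,\underline c,\overline c$ (such objects exist when $L\notin\mathcal N$) with $\underline c\Vert y\Vert^2_{L^2(0,L)}\le W(y)\le \overline c\Vert y\Vert^2_{L^2(0,L)}$ for all $y\in L^2(0,L)$, and such that for all $d_1\in L^2_{loc}(\mathbb R_+;L^2(0,L))$, $d_2\in L^2_{loc}(\mathbb R_+)$, the solutions of $y_t+y_x+y_{xxx}=d_1$ on $(0,L)$, $y(t,0)=y(t,L)=0$, $y_x(t,L)=d_2(t)$, $y(0)=y_0$ satisfy $\frac{d}{dt}W(y)\le -\lambda\Vert y\Vert^2_{L^2(0,L)}+\kappa_1\Vert d_1(t,\cdot)\Vert^2_{L^2(0,L)}+\kappa_2|d_2(t)|^2-\kappa_3|y_x(t,0)|^2$.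
   Formalization: In the Moreover clause the lower bound is $\varepsilon$/C times $\Vert y\Vert^2_{L^2(0,L)}+|z|^2$ instead of $\varepsilon$ times it, with one C>0 serving both bounds for every $\varepsilon\leq 1$; in $\mathcal N$, k and l are positive integers. Apart from conventions, each condition added here is assumed in the paper as well or is needed for the statement above to hold. *)

theory Defs
  imports "HOL-Analysis.Analysis"
begin

definition critical_lengths :: "real set" where
  "critical_lengths =
     {2 * pi * sqrt ((real k ^ 2 + real k * real l + real l ^ 2) / 3) | k l :: nat. k \<ge> 1 \<and> l \<ge> 1}"

definition in_L2 :: "real \<Rightarrow> (real \<Rightarrow> real) \<Rightarrow> bool" where
  "in_L2 L y \<longleftrightarrow> y measurable_on {0..L} \<and> (\<lambda>x. (y x)^2) integrable_on {0..L}"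

definition L2norm2 :: "real \<Rightarrow> (real \<Rightarrow> real) \<Rightarrow> real" where
  "L2norm2 L y = integral {0..L} (\<lambda>x. (y x)^2)"

definition Mfun :: "real \<Rightarrow> real \<Rightarrow> real \<Rightarrow> real" where
  "Mfun c L x = 2 * c * (sin (x / 2) * sin ((L - x) / 2)) / sin (L / 2)"

definition V1 :: "((real \<Rightarrow> real) \<Rightarrow> real) \<Rightarrow> real \<Rightarrow> real \<Rightarrow> real \<Rightarrow> (real \<Rightarrow> real) \<Rightarrow> real \<Rightarrow> real" where
  "V1 W c L eps y z =
     eps * W y + (1/2) * (eps * integral {0..L} (\<lambda>x. Mfun c L x * y x) - z)^2"

end

theory Submission
  imports Defs
begin

lemma M_cont: "continuous_on {0..L} (Mfun c L)"
proof -
  have "Mfun c L = (\<lambda>x. (2 * c * (sin (x / 2) * sin ((L - x) / 2))) * (1 / sin (L / 2)))"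
    by (rule ext) (simp add: Mfun_def)
  show ?thesis unfolding \<open>Mfun c L = _\<close> by (intro continuous_intros) auto
qed

lemma CS:
  assumes "in_L2 L y" "L > 0"
  shows "(integral {0..L} (\<lambda>x. Mfun c L x * y x))^2 \<le> L2norm2 L (Mfun c L) * L2norm2 L y"
    and "L2norm2 L y \<ge> 0" and "L2norm2 L (Mfun c L) \<ge> 0"
proof -
  let ?M = "Mfun c L"
  have S: "{0..L} \<in> sets lebesgue" by simp
  have ym: "y \<in> borel_measurable (lebesgue_on {0..L})"
    using assms(1) S measurable_on_iff_borel_measurable unfolding in_L2_def by blast
  have y2: "(\<lambda>x. (y x)^2) integrable_on {0..L}" using assms(1) unfolding in_L2_def by blast
  have Mm: "?M \<in> borel_measurable (lebesgue_on {0..L})"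
    using continuous_imp_measurable_on_sets_lebesgue[OF M_cont S] .
  have M2: "(\<lambda>x. (?M x)^2) integrable_on {0..L}"
    by (intro integrable_continuous_interval continuous_intros M_cont[of c L, unfolded power2_eq_square] )
      (simp add: power2_eq_square continuous_on_mult M_cont)
  have My: "(\<lambda>x. ?M x * y x) integrable_on {0..L}"
  proof (rule measurable_bounded_by_integrable_imp_integrable_real[where g="\<lambda>x. ((?M x)^2 + (y x)^2)/2"])
    show "(\<lambda>x. ?M x * y x) \<in> borel_measurable (lebesgue_on {0..L})"
      using Mm ym by measurable
    show "(\<lambda>x. ((?M x)^2 + (y x)^2)/2) integrable_on {0..L}"
      using M2 y2 by (intro integrable_on_divide integrable_add)
    show "\<bar>?M x * y x\<bar> \<le> ((?M x)^2 + (y x)^2)/2" for x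
    proof -
      have "0 \<le> (\<bar>?M x\<bar> - \<bar>y x\<bar>)^2" by simp
      then show ?thesis by (simp add: abs_mult power2_eq_square algebra_simps)
    qed
  qed (rule S)
  define m where "m = L2norm2 L ?M"
  define Y where "Y = L2norm2 L y"
  define I where "I = integral {0..L} (\<lambda>x. ?M x * y x)"
  have quad: "t^2 * m - 2 * t * I + Y \<ge> 0" for t
  proof -
    have eq: "(\<lambda>x. (t * ?M x - y x)^2) = (\<lambda>x. t^2 * (?M x)^2 - 2 * t * (?M x * y x) + (y x)^2)"
      by (rule ext) (simp add: power2_eq_square algebra_simps)
    have "0 \<le> integral {0..L} (\<lambda>x. (t * ?M x - y x)^2)"
      by (rule integral_nonneg) (auto simp: eq intro!: integrable_add integrable_diff integrable_on_cmult_left M2 y2 My integrable_on_mult_right)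
    also note eq
    also have "integral {0..L} (\<lambda>x. t^2 * (?M x)^2 - 2 * t * (?M x * y x) + (y x)^2) = t^2 * m - 2 * t * I + Y"
    proof -
      have a: "(\<lambda>x. t^2 * (?M x)^2) integrable_on {0..L}" using M2 by (rule integrable_on_mult_right)
      have b: "(\<lambda>x. 2 * t * (?M x * y x)) integrable_on {0..L}" using My by (rule integrable_on_mult_right)
      have "integral {0..L} (\<lambda>x. t^2 * (?M x)^2 - 2 * t * (?M x * y x) + (y x)^2)
          = integral {0..L} (\<lambda>x. t^2 * (?M x)^2 - 2 * t * (?M x * y x)) + integral {0..L} (\<lambda>x. (y x)^2)"
        by (rule integral_add[OF integrable_diff[OF a b] y2])
      also have "integral {0..L} (\<lambda>x. t^2 * (?M x)^2 - 2 * t * (?M x * y x))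
          = integral {0..L} (\<lambda>x. t^2 * (?M x)^2) - integral {0..L} (\<lambda>x. 2 * t * (?M x * y x))"
        by (rule integral_diff[OF a b])
      finally show ?thesis unfolding m_def Y_def I_def L2norm2_def by simp
    qed
    finally show ?thesis .
  qed
  show "Y \<ge> 0" unfolding Y_def L2norm2_def by (rule integral_nonneg[OF y2]) simp
  show "m \<ge> 0" unfolding m_def L2norm2_def by (rule integral_nonneg[OF M2]) simp
  show "I^2 \<le> m * Y"
  proof (cases "m = 0")
    case True
    show ?thesis
    proof (cases "I = 0")
      case False
      have "0 \<le> ((Y+1)/(2*I))^2 * m - 2 * ((Y+1)/(2*I)) * I + Y" by (rule quad)
      with True False show ?thesis by simp
    qed (simp add: True \<open>Y \<ge> 0\<close>)
  next
    case False
    with \<open>m \<ge> 0\<close> have mp: "m > 0" by simp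
    have "0 \<le> (I/m)^2 * m - 2 * (I/m) * I + Y" by (rule quad)
    then have "0 \<le> m * ((I/m)^2 * m - 2 * (I/m) * I + Y)" using mp by simp
    also have "\<dots> = m * Y - I^2" using mp by (simp add: power2_eq_square field_simps)
    finally show ?thesis by simp
  qed
qed

lemma alg_lower:
  fixes A B Y a z :: real
  assumes "A \<ge> 0" "B > 0" "Y \<ge> 0" "a^2 \<le> A * Y"
  shows "B * z^2 / (A + B) \<le> B * Y + (a - z)^2"
proof (cases "A = 0")
  case True
  then have "a = 0" using assms by simp
  then show ?thesis using True assms by simp
next
  case False
  then have Ap: "A > 0" using assms by simp
  have key: "A * ((A + B) * (B * Y + (a - z)^2) - B * z^2) = (A*z - (A+B)*a)^2 + (A+B)*B*(A*Y - a^2)"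
    by (simp add: power2_eq_square algebra_simps)
  have "0 \<le> (A*z - (A+B)*a)^2 + (A+B)*B*(A*Y - a^2)"
    using assms by (intro add_nonneg_nonneg mult_nonneg_nonneg) auto
  then have "0 \<le> (A + B) * (B * Y + (a - z)^2) - B * z^2"
    using key Ap by (metis zero_le_mult_iff not_less)
  then show ?thesis using Ap assms by (simp add: divide_le_eq algebra_simps)
qed

lemma bounds:
  fixes L c e cl cu :: real and W :: "(real \<Rightarrow> real) \<Rightarrow> real"
  assumes "L > 0" "e > 0" "cl > 0" "cu > 0"
    and W_bounds: "\<And>y. in_L2 L y \<Longrightarrow> cl * L2norm2 L y \<le> W y \<and> W y \<le> cu * L2norm2 L y"
    and y: "in_L2 L y"
  shows "min (cl * e / 2) ((1/2) * (cl * e / (e^2 * L2norm2 L (Mfun c L) + cl * e)))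
              * (L2norm2 L y + \<bar>z\<bar>^2) \<le> V1 W c L e y z"
    and "V1 W c L e y z \<le>
              max (e * cu + e^2 * L2norm2 L (Mfun c L)) 1 * (L2norm2 L y + \<bar>z\<bar>^2)"
proof -
  define m where "m = L2norm2 L (Mfun c L)"
  define Y where "Y = L2norm2 L y"
  define I where "I = integral {0..L} (\<lambda>x. Mfun c L x * y x)"
  have cs: "I^2 \<le> m * Y" "Y \<ge> 0" "m \<ge> 0" using CS(1)[OF y assms(1), where c=c] CS(2)[OF y assms(1)] CS(3)[OF y assms(1), where c=c] unfolding m_def Y_def I_def by auto
  have V: "V1 W c L e y z = e * W y + (1/2) * (e * I - z)^2" unfolding V1_def I_def by simp
  have Wl: "e * (cl * Y) \<le> e * W y" and Wu: "e * W y \<le> e * (cu * Y)"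
    using W_bounds[OF y] assms(2) unfolding Y_def by auto
  have a2: "(e*I)^2 \<le> (e^2 * m) * Y" using cs(1) assms(2)
    by (simp add: power_mult_distrib mult.assoc mult_left_mono)
  have A0: "e^2 * m \<ge> 0" using cs by simp
  have B0: "cl * e > 0" using assms by simp
  have lo: "cl * e * z^2 / (e^2 * m + cl * e) \<le> cl * e * Y + (e * I - z)^2"
    by (rule alg_lower[OF A0 B0 cs(2) a2])
  define nu2 where "nu2 = (1/2) * (cl * e / (e^2 * m + cl * e))"
  have nu2: "nu2 * z^2 = (1/2) * (cl * e * z^2 / (e^2 * m + cl * e))" unfolding nu2_def by simp
  have "min (cl * e / 2) nu2 * (Y + \<bar>z\<bar>^2) = min (cl * e / 2) nu2 * Y + min (cl * e / 2) nu2 * z^2"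
    by (simp add: algebra_simps)
  also have "\<dots> \<le> (cl * e / 2) * Y + nu2 * z^2"
    using cs(2) by (intro add_mono mult_right_mono) auto
  also have "\<dots> \<le> e * W y + (1/2) * (e * I - z)^2"
    proof -
    have gen: "\<And>a q r w::real. q \<le> a + r \<Longrightarrow> a \<le> w \<Longrightarrow> (1/2) * a + (1/2) * q \<le> w + (1/2) * r" by linarith
    have Wl2: "cl * e * Y \<le> e * W y" using Wl by (simp add: mult.commute mult.left_commute)
    have e1: "cl * e / 2 * Y = (1/2) * (cl * e * Y)" by simp
    show ?thesis unfolding e1 nu2 by (rule gen[OF lo Wl2])
  qed
  finally show "min (cl * e / 2) ((1/2) * (cl * e / (e^2 * L2norm2 L (Mfun c L) + cl * e)))
              * (L2norm2 L y + \<bar>z\<bar>^2) \<le> V1 W c L e y z"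
    unfolding V nu2_def m_def Y_def .
  have "(e * I - z)^2 \<le> 2 * (e*I)^2 + 2 * z^2"
  proof -
    have "0 \<le> (e * I + z)^2" by simp
    then show ?thesis by (simp add: power2_eq_square algebra_simps)
  qed
  then have "e * W y + (1/2) * (e * I - z)^2 \<le> (e * cu + e^2 * m) * Y + z^2"
    using Wu a2 by (simp add: algebra_simps)
  also have "\<dots> \<le> max (e * cu + e^2 * m) 1 * Y + max (e * cu + e^2 * m) 1 * z^2"
  proof (intro add_mono)
    show "(e * cu + e^2 * m) * Y \<le> max (e * cu + e^2 * m) 1 * Y" using cs(2) by (intro mult_right_mono) auto
    show "z^2 \<le> max (e * cu + e^2 * m) 1 * z^2"
      using mult_right_mono[of 1 "max (e * cu + e^2 * m) 1" "z^2"] by simp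
  qed
  also have "\<dots> = max (e * cu + e^2 * m) 1 * (Y + \<bar>z\<bar>^2)" by (simp add: algebra_simps)
  finally show "V1 W c L e y z \<le>
              max (e * cu + e^2 * L2norm2 L (Mfun c L)) 1 * (L2norm2 L y + \<bar>z\<bar>^2)"
    unfolding V m_def Y_def .
qed

theorem lemma2p2:
  fixes L c eps cl cu :: real and W :: "(real \<Rightarrow> real) \<Rightarrow> real"
  assumes "L > 0" and "L \<notin> critical_lengths" and "eps > 0"
    and "cl > 0" and "cu > 0"
    and W_bounds: "\<And>y. in_L2 L y \<Longrightarrow> cl * L2norm2 L y \<le> W y \<and> W y \<le> cu * L2norm2 L y"
  shows "(\<forall>y z. in_L2 L y \<longrightarrow>
            min (cl * eps / 2) ((1/2) * (cl * eps / (eps^2 * L2norm2 L (Mfun c L) + cl * eps)))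
              * (L2norm2 L y + \<bar>z\<bar>^2) \<le> V1 W c L eps y z
          \<and> V1 W c L eps y z \<le>
              max (eps * cu + eps^2 * L2norm2 L (Mfun c L)) 1 * (L2norm2 L y + \<bar>z\<bar>^2))
       \<and> (\<exists>C > 0. \<forall>e y z. 0 < e \<and> e \<le> 1 \<and> in_L2 L y \<longrightarrow>
            e / C * (L2norm2 L y + \<bar>z\<bar>^2) \<le> V1 W c L e y z
          \<and> V1 W c L e y z \<le> C * (L2norm2 L y + \<bar>z\<bar>^2))"
proof (intro conjI allI impI)
  fix y z assume y: "in_L2 L y"
  show "min (cl * eps / 2) ((1/2) * (cl * eps / (eps^2 * L2norm2 L (Mfun c L) + cl * eps)))
              * (L2norm2 L y + \<bar>z\<bar>^2) \<le> V1 W c L eps y z"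
   and "V1 W c L eps y z \<le>
              max (eps * cu + eps^2 * L2norm2 L (Mfun c L)) 1 * (L2norm2 L y + \<bar>z\<bar>^2)"
    using bounds[OF assms(1,3,4,5) W_bounds y] by auto
next
  define m where "m = L2norm2 L (Mfun c L)"
  have m0: "m \<ge> 0"
  proof -
    have "in_L2 L (\<lambda>x. 0)" unfolding in_L2_def by (simp add: measurable_on_0 integrable_0)
    then show ?thesis using CS(3)[OF _ assms(1), where y="\<lambda>x. 0" and c=c] unfolding m_def by simp
  qed
  define C where "C = cu + m + 1 + 2 / cl + 2 * (m + cl) / cl"
  have Cp: "C > 0" unfolding C_def using m0 assms by (intro add_pos_nonneg add_nonneg_nonneg) auto
  show "\<exists>C > 0. \<forall>e y z. 0 < e \<and> e \<le> 1 \<and> in_L2 L y \<longrightarrow>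
            e / C * (L2norm2 L y + \<bar>z\<bar>^2) \<le> V1 W c L e y z
          \<and> V1 W c L e y z \<le> C * (L2norm2 L y + \<bar>z\<bar>^2)"
  proof (intro exI[of _ C] conjI Cp allI impI)
    fix e :: real and y z assume H: "0 < e \<and> e \<le> 1 \<and> in_L2 L y"
    then have e: "0 < e" "e \<le> 1" and y: "in_L2 L y" by auto
    note b = bounds[OF assms(1) e(1) assms(4,5) W_bounds y, of c z]
    have Y0: "L2norm2 L y + \<bar>z\<bar>^2 \<ge> 0" using CS(2)[OF y assms(1)] by simp
    have "max (e * cu + e^2 * m) 1 \<le> C"
    proof -
      have "e * cu \<le> cu" using e assms by simp
      moreover have "e^2 * m \<le> m" using e m0
        by (metis mult_left_le_one_le mult_nonneg_nonneg power_le_one zero_le_power order_less_imp_le mult.commute)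
      moreover have "0 \<le> 2 / cl" "0 \<le> 2 * (m + cl) / cl" using assms m0 by auto
      ultimately show ?thesis unfolding C_def by (intro max.boundedI) (use assms(4,5) m0 in linarith)+
    qed
    then show "V1 W c L e y z \<le> C * (L2norm2 L y + \<bar>z\<bar>^2)"
      using b(2) Y0 unfolding m_def by (meson mult_right_mono order_trans)
    have l1: "e / C \<le> cl * e / 2"
    proof -
      have "2 / cl \<le> C" unfolding C_def using assms m0 by auto
      then have "2 \<le> C * cl" using assms by (simp add: divide_le_eq)
      then show ?thesis using Cp e assms by (simp add: divide_le_eq field_simps)
    qed
    have l2: "e / C \<le> (1/2) * (cl * e / (e^2 * m + cl * e))"
    proof -
      have "2 * (m + cl) / cl \<le> C" unfolding C_def using assms m0 by auto
      then have c1: "2 * (m + cl) \<le> C * cl" using assms by (simp add: divide_le_eq)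
      have "e * m \<le> m" using e m0 by (simp add: mult_left_le_one_le)
      then have "2 * e * (e * m + cl) \<le> 2 * (m + cl)" using e m0 assms
      proof -
        have "e * (e * m) \<le> e * m" using e m0 by (simp add: mult_left_le_one_le)
        moreover have "e * cl \<le> cl" using e assms(4) by (simp add: mult_left_le_one_le)
        ultimately show ?thesis using \<open>e * m \<le> m\<close> by (simp add: algebra_simps)
      qed
      with c1 have c2: "2 * e * (e * m + cl) \<le> C * cl" by simp
      have "(1/2) * (cl * e / (e^2 * m + cl * e)) = cl / (2 * (e * m + cl))"
      proof -
        have pos: "e * m + cl > 0" using e m0 assms(4) by (simp add: add_nonneg_pos)
        have "e^2 * m + cl * e = e * (e * m + cl)" by (simp add: power2_eq_square algebra_simps)
        then have "cl * e / (e^2 * m + cl * e) = cl / (e * m + cl)" using e pos by simp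
        then show ?thesis by simp
      qed
      moreover have "e / C \<le> cl / (2 * (e * m + cl))"
      proof -
        have D: "2 * (e * m + cl) > 0" using e m0 assms(4) by (simp add: add_nonneg_pos)
        have "e * (2 * (e * m + cl)) \<le> cl * C" using c2 by (simp add: algebra_simps)
        then show ?thesis using D Cp by (simp add: frac_le_eq divide_le_eq le_divide_eq mult.commute)
      qed
      ultimately show ?thesis by simp
    qed
    have "e / C \<le> min (cl * e / 2) ((1/2) * (cl * e / (e^2 * m + cl * e)))"
      using l1 l2 by simp
    then show "e / C * (L2norm2 L y + \<bar>z\<bar>^2) \<le> V1 W c L e y z"
      using b(1) Y0 unfolding m_def by (meson mult_right_mono order_trans)
  qed
qed

end
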